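(* Let $n\ge 6$ be even, and let $d_*=(\epsilon_1,\dots,\epsilon_{n-1},h)$ and $d_*'=(\epsilon_1',\dots,\epsilon_{n-1}',h')$ be neighbors. Then there is no index $j\in[1,n-1]$ with $\epsilon_j=1$ and $\epsilon'_j=-1$, nor with $\epsilon_j=-1$ and $\epsilon'_j=1$.
   Context: Symbols are $[1,n]$; $\mathrm{dist}(a,b)$ is the minimum of the residues of $a-b$ and $b-a$ mod $n$ (in $[0,n-1]$). A Latin row is a permutation $(s_1,\dots,s_n)$ of $[1,n]$; its inner distance is $\min_j\mathrm{dist}(s_j,s_{j+1})$. Its extended difference row is $(\epsilon_1,\dots,\epsilon_{n-1},h)$ where, with $h_j\in[0,n-1]$, $h_j\equiv s_{j+1}-s_j\pmod n$ ($1\le j\le n-1$), $h_n\equiv s_1-s_n\pmod n$, $\epsilon_j=h_j-\frac n2$, $h=h_n-\frac n2$ (integers); for rows of inner distance $\frac n2-1$ each $\epsilon_j\in\{-1,0,1\}$. A Latin rectangle is a matrix over $[1,n]$ with no repeats in any row or column; its inner distance is the minimum of $\mathrm{dist}$ over symbols in horizontally or vertically adjacent cells. Two extended difference rows of Latin rows of inner distance $\frac n2-1$ are neighbors if there exist Latin rows $r,r'$ with these extended difference rows such that the $2\times n$ matrix with rows $r$ and $r'$ is a Latin rectangle of inner distance $\frac n2-1$. *)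

theory Defs
  imports Main
begin

text \<open>Symbols are the integers 1..n. Rows are int lists of length n; list position k
  (0-based) holds the entry s_(k+1) of the paper.\<close>

definition cdist :: "nat \<Rightarrow> int \<Rightarrow> int \<Rightarrow> int" where
  "cdist n a b = min ((a - b) mod int n) ((b - a) mod int n)"

definition latin_row :: "nat \<Rightarrow> int list \<Rightarrow> bool" where
  "latin_row n s \<longleftrightarrow> length s = n \<and> distinct s \<and> set s = {1..int n}"

definition row_inner_dist :: "nat \<Rightarrow> int list \<Rightarrow> int" where
  "row_inner_dist n s = Min {cdist n (s ! j) (s ! Suc j) | j. Suc j < n}"

definition ext_diff_row :: "nat \<Rightarrow> int list \<Rightarrow> int list" where
  "ext_diff_row n s =
     map (\<lambda>j. (s ! Suc j - s ! j) mod int n - int n div 2) [0..<n - 1]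
     @ [(s ! 0 - s ! (n - 1)) mod int n - int n div 2]"

definition latin_rect :: "nat \<Rightarrow> int list list \<Rightarrow> bool" where
  "latin_rect n M \<longleftrightarrow>
     (\<forall>r\<in>set M. length r = n \<and> distinct r \<and> set r \<subseteq> {1..int n}) \<and>
     (\<forall>j<n. distinct (map (\<lambda>r. r ! j) M))"

definition rect_inner_dist :: "nat \<Rightarrow> int list list \<Rightarrow> int" where
  "rect_inner_dist n M = Min
     ({cdist n (M ! i ! j) (M ! i ! Suc j) | i j. i < length M \<and> Suc j < n} \<union>
      {cdist n (M ! i ! j) (M ! Suc i ! j) | i j. Suc i < length M \<and> j < n})"

definition neighbors :: "nat \<Rightarrow> int list \<Rightarrow> int list \<Rightarrow> bool" where
  "neighbors n d d' \<longleftrightarrow>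
     (\<exists>r r'. latin_row n r \<and> latin_row n r' \<and>
        row_inner_dist n r = int n div 2 - 1 \<and> row_inner_dist n r' = int n div 2 - 1 \<and>
        ext_diff_row n r = d \<and> ext_diff_row n r' = d' \<and>
        latin_rect n [r, r'] \<and> rect_inner_dist n [r, r'] = int n div 2 - 1)"

end

theory Submission
  imports Defs
begin

definition adjr :: "int \<Rightarrow> int \<Rightarrow> int \<Rightarrow> bool" where
  "adjr M u v \<longleftrightarrow> M - 1 \<le> \<bar>v - u\<bar> \<and> \<bar>v - u\<bar> \<le> M + 1"

lemma mod_lin:
  fixes u v N :: int
  assumes "0 \<le> u" "u < N" "0 \<le> v" "v < N"
  shows "(v - u) mod N = (if u \<le> v then v - u else v - u + N)"
proof (cases "u \<le> v")
  case True then show ?thesis using assms by (simp add: mod_pos_pos_trivial)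
next
  case False
  have "(v - u) mod N = (v - u + N) mod N" by simp
  also have "\<dots> = v - u + N" by (rule mod_pos_pos_trivial) (use assms False in linarith)+
  finally show ?thesis using False by simp
qed

lemma cd_res:
  fixes u v N M :: int
  assumes "N = 2*M" "M \<ge> 3" "0 \<le> u" "u < N" "0 \<le> v" "v < N"
  shows "(M - 1 \<le> min ((u - v) mod N) ((v - u) mod N)) \<longleftrightarrow> adjr M u v"
  using mod_lin[of u N v] mod_lin[of v N u] assms by (auto simp: adjr_def abs_if)

lemma interior_arith:
  fixes M pA pB pC pD pE qA qB qC qD qE :: int
  assumes "M \<ge> 3"
    and "0 \<le> pA" "pA < 2*M" "0 \<le> pD" "pD < 2*M" "0 \<le> pE" "pE < 2*M"
    and "0 \<le> qA" "qA < 2*M" "0 \<le> qB" "qB < 2*M" "0 \<le> qC" "qC < 2*M"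
    and "0 \<le> qD" "qD < 2*M" "0 \<le> qE" "qE < 2*M"
    and "pB = 0" "pC = M + 1" "qC - qB = M - 1 \<or> qC - qB = M - 1 - 2*M"
    and "adjr M pA pB" "adjr M pC pD" "adjr M pD pE"
    and "adjr M qA qB" "adjr M qC qD" "adjr M qD qE"
    and "adjr M pA qA" "adjr M pB qB" "adjr M pC qC" "adjr M pD qD" "adjr M pE qE"
    and "pD \<noteq> pB" "pA \<noteq> pC" "pE \<noteq> pA" "pE \<noteq> pC"
    and "qD \<noteq> qC" "qA \<noteq> qB" "qE \<noteq> qC" "qE \<noteq> qA" "qD \<noteq> qB" "qA \<noteq> qC"
  shows False
proof -
  have A: "\<And>u v. adjr M u v \<longleftrightarrow> (M - 1 \<le> v - u \<and> v - u \<le> M + 1) \<or> (M - 1 \<le> u - v \<and> u - v \<le> M + 1)"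
    using assms(1) unfolding adjr_def by (auto simp: abs_if)
  have q1r: "M - 1 \<le> qB \<and> qB \<le> M + 1" using assms(1,10,11,18,28) A by auto
  have q2r: "qC \<le> 2" using assms(1,12,13,19,29) A by auto
  have q: "qB = M + 1 \<and> qC = 0" using q1r q2r assms(1,12,20) by auto
  have p3r: "pD = 1 \<or> pD = 2" using assms(1,4,5,18,19,22,32) A by auto
  have q3r: "qD = M - 1 \<or> qD = M" using assms(1,14,15,25,40) A q by auto
  have pq3: "pD = 1 \<and> qD = M" using p3r q3r assms(30) A assms(1) by auto
  have p0r: "pA = M - 1 \<or> pA = M" using assms(1,2,3,18,19,21,33) A by auto
  have q0r: "qA = 1 \<or> qA = 2" using assms(1,8,9,24,41) A q by auto
  have pq0: "pA = M \<and> qA = 1" using p0r q0r assms(27) A assms(1) by auto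
  have pE: "pE = M + 2" using pq3 pq0 assms(1,6,7,19,23,34,35) A by auto
  have qE: "qE = 2*M - 1" using pq3 pq0 q assms(1,16,17,26,38,39) A by auto
  show False using pE qE assms(1,31) A by auto
qed


lemma adjr_iff: "M \<ge> 3 \<Longrightarrow> adjr M u v \<longleftrightarrow> (M - 1 \<le> v - u \<and> v - u \<le> M + 1) \<or> (M - 1 \<le> u - v \<and> u - v \<le> M + 1)"
  unfolding adjr_def by (auto simp: abs_if)

lemma k0_arith:
  fixes M pA pB pC pD pE qA qB qC qD qE :: int
  assumes M3: "M \<ge> 3"
    and r: "0 \<le> pC" "pC < 2*M" "0 \<le> pD" "pD < 2*M" "0 \<le> pE" "pE < 2*M"
      "0 \<le> qA" "qA < 2*M" "0 \<le> qB" "qB < 2*M" "0 \<le> qC" "qC < 2*M"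
      "0 \<le> qD" "qD < 2*M" "0 \<le> qE" "qE < 2*M"
    and c: "pA = 0" "pB = M + 1" "qB - qA = M - 1 \<or> qB - qA = M - 1 - 2*M"
    and h: "adjr M pB pC" "adjr M pC pD" "adjr M pD pE"
      "adjr M qB qC" "adjr M qC qD" "adjr M qD qE"
    and v: "adjr M pA qA" "adjr M pB qB" "adjr M pC qC" "adjr M pE qE"
    and d: "pC \<noteq> pA" "pD \<noteq> pB" "pE \<noteq> pA" "pE \<noteq> pC"
      "qC \<noteq> qA" "qD \<noteq> qB" "qE \<noteq> qC" "qE \<noteq> qA"
  shows "(pD = M + 2 \<or> qD = 2*M - 1) \<and> pC = 1 \<and> qA = M + 1 \<and> qB = 0 \<and> qC = M"
proof -
  note A = adjr_iff[OF M3]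
  have q0r: "M - 1 \<le> qA \<and> qA \<le> M + 1" using M3 r(7,8) c(1) v(1) A by auto
  have q1r: "qB \<le> 2" using M3 r(9,10) c(2) v(2) A by auto
  have q: "qA = M + 1 \<and> qB = 0" using q0r q1r r(9) c(3) M3 by auto
  have p2r: "pC = 1 \<or> pC = 2" using M3 r(1,2) c(1,2) h(1) d(1) A by auto
  have q2r: "qC = M - 1 \<or> qC = M" using M3 r(11,12) q h(4) d(5) A by auto
  have pq2: "pC = 1 \<and> qC = M" using p2r q2r v(3) A M3 by auto
  have "pD = M + 2 \<or> qD = 2*M - 1"
  proof (rule ccontr)
    assume na: "\<not> (pD = M + 2 \<or> qD = 2*M - 1)"
    have pD: "pD = M" using na pq2 M3 r(3,4) c(2) h(2) d(2) A by auto
    have qD: "qD = 1" using na pq2 q M3 r(13,14) h(5) d(6) A by auto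
    have pE: "pE = 2*M - 1" using pD pq2 M3 r(5,6) c(1) h(3) d(3,4) A by auto
    have qE: "qE = M + 2" using qD pq2 q M3 r(15,16) h(6) d(7,8) A by auto
    show False using pE qE v(4) A M3 by auto
  qed
  then show ?thesis using q pq2 by auto
qed

lemma stepP:
  fixes M x y z :: int
  assumes "M \<ge> 3" "M + 2 \<le> x" "x \<le> 2*M - 1" "0 \<le> y" "y < 2*M" "0 \<le> z" "z < 2*M"
    "adjr M x y" "adjr M y z" "y \<noteq> 1" "z \<noteq> 0" "z \<noteq> 1" "z \<noteq> M + 1"
  shows "M + 2 \<le> z \<and> z \<le> 2*M - 1"
  using assms adjr_iff[OF assms(1)] by auto

lemma stepQ:
  fixes M x y z :: int
  assumes "M \<ge> 3" "M + 2 \<le> x" "x \<le> 2*M - 1" "0 \<le> y" "y < 2*M" "0 \<le> z" "z < 2*M"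
    "adjr M x y" "adjr M y z" "y \<noteq> M" "z \<noteq> 0" "z \<noteq> M" "z \<noteq> M + 1"
  shows "M + 2 \<le> z \<and> z \<le> 2*M - 1"
  using assms adjr_iff[OF assms(1)] by auto

lemma chain:
  fixes w :: "nat \<Rightarrow> int" and m n :: nat
  assumes nm: "n = 2*m" and m3: "m \<ge> 3" and inj: "inj_on w {..<n}"
    and w3: "w 3 \<in> {int m + 2..2*int m - 1}"
    and step: "\<And>j. 3 \<le> j \<Longrightarrow> j + 2 < n \<Longrightarrow> w j \<in> {int m + 2..2*int m - 1}
                 \<Longrightarrow> w (j + 2) \<in> {int m + 2..2*int m - 1}"
  shows False
proof -
  let ?S = "{int m + 2..2*int m - 1}"
  have all: "3 + 2*i < n \<Longrightarrow> w (3 + 2*i) \<in> ?S" for i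
  proof (induction i)
    case 0 then show ?case using w3 by simp
  next
    case (Suc i)
    have "w (3 + 2*i + 2) \<in> ?S" using Suc step[of "3 + 2*i"] by simp
    then show ?case by (simp add: add.commute add.left_commute)
  qed
  define f where "f i = w (3 + 2*i)" for i
  have injf: "inj_on f {..<m-1}"
  proof (rule inj_onI)
    fix i j assume "i \<in> {..<m-1}" "j \<in> {..<m-1}" "f i = f j"
    then have "3 + 2*i = 3 + 2*j" using inj_onD[OF inj, of "3 + 2*i" "3 + 2*j"] nm unfolding f_def by auto
    then show "i = j" by simp
  qed
  have sub: "f ` {..<m-1} \<subseteq> ?S" using all nm unfolding f_def by auto
  have "card (f ` {..<m-1}) \<le> card ?S" by (rule card_mono[OF _ sub]) simp
  moreover have "card (f ` {..<m-1}) = m - 1" using card_image[OF injf] by simp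
  moreover have "card ?S = m - 2" using m3 by simp
  ultimately show False using m3 by simp
qed


lemma core:
  fixes n m k :: nat and p q :: "nat \<Rightarrow> int"
  assumes nm: "n = 2*m" and m3: "m \<ge> 3"
    and rp: "\<forall>j<n. 1 \<le> p j \<and> p j \<le> int n" and rq: "\<forall>j<n. 1 \<le> q j \<and> q j \<le> int n"
    and ip: "inj_on p {..<n}" and iq: "inj_on q {..<n}"
    and hp: "\<forall>j. Suc j < n \<longrightarrow> int m - 1 \<le> cdist n (p j) (p (Suc j))"
    and hq: "\<forall>j. Suc j < n \<longrightarrow> int m - 1 \<le> cdist n (q j) (q (Suc j))"
    and hv: "\<forall>j<n. int m - 1 \<le> cdist n (p j) (q j)"
    and kn: "Suc k < n"
    and cp: "(p (Suc k) - p k) mod int n = int m + 1"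
    and cq: "(q (Suc k) - q k) mod int n = int m - 1"
    and kc: "k = 0 \<or> k + 3 < n"
  shows False
proof -
  define N where "N = int n"
  define M where "M = int m"
  define a where "a = p k"
  define \<rho> where "\<rho> j = (p j - a) mod N" for j
  define \<sigma> where "\<sigma> j = (q j - a) mod N" for j
  have NM: "N = 2*M" using nm unfolding N_def M_def by simp
  have M3: "M \<ge> 3" using m3 unfolding M_def by simp
  have Npos: "N > 0" using NM M3 by simp
  have r\<rho>: "0 \<le> \<rho> j \<and> \<rho> j < N" for j unfolding \<rho>_def using Npos by simp
  have r\<sigma>: "0 \<le> \<sigma> j \<and> \<sigma> j < N" for j unfolding \<sigma>_def using Npos by simp
  have cpp: "cdist n (p i) (p j) = min ((\<rho> i - \<rho> j) mod N) ((\<rho> j - \<rho> i) mod N)" for i j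
    unfolding cdist_def \<rho>_def N_def by (simp add: mod_diff_eq)
  have cqq: "cdist n (q i) (q j) = min ((\<sigma> i - \<sigma> j) mod N) ((\<sigma> j - \<sigma> i) mod N)" for i j
    unfolding cdist_def \<sigma>_def N_def by (simp add: mod_diff_eq)
  have cpq: "cdist n (p i) (q j) = min ((\<rho> i - \<sigma> j) mod N) ((\<sigma> j - \<rho> i) mod N)" for i j
    unfolding cdist_def \<rho>_def \<sigma>_def N_def by (simp add: mod_diff_eq)
  have Ap: "adjr M (\<rho> j) (\<rho> (Suc j))" if "Suc j < n" for j
    using hp that cpp[of j "Suc j"] cd_res[OF NM M3, of "\<rho> j" "\<rho> (Suc j)"] r\<rho>[of j] r\<rho>[of "Suc j"]
    unfolding M_def by auto
  have Aq: "adjr M (\<sigma> j) (\<sigma> (Suc j))" if "Suc j < n" for j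
    using hq that cqq[of j "Suc j"] cd_res[OF NM M3, of "\<sigma> j" "\<sigma> (Suc j)"] r\<sigma>[of j] r\<sigma>[of "Suc j"]
    unfolding M_def by auto
  have Av: "adjr M (\<rho> j) (\<sigma> j)" if "j < n" for j
    using hv that cpq[of j j] cd_res[OF NM M3, of "\<rho> j" "\<sigma> j"] r\<rho>[of j] r\<sigma>[of j]
    unfolding M_def by auto
  have eqv: "x = y" if "1 \<le> x" "x \<le> N" "1 \<le> y" "y \<le> N" "(x - a) mod N = (y - a) mod N" for x y
  proof -
    have "N dvd (x - a) - (y - a)" using that(5) by (simp add: mod_eq_dvd_iff)
    then have d: "N dvd x - y" by simp
    show ?thesis
    proof (rule ccontr)
      assume "x \<noteq> y"
      then have "\<bar>N\<bar> \<le> \<bar>x - y\<bar>" using d dvd_imp_le_int by auto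
      then show False using that Npos by auto
    qed
  qed
  have n\<rho>: "\<rho> i \<noteq> \<rho> j" if "i < n" "j < n" "i \<noteq> j" for i j
  proof
    assume "\<rho> i = \<rho> j"
    then have "p i = p j" using eqv[of "p i" "p j"] rp that unfolding \<rho>_def N_def by auto
    then show False using inj_onD[OF ip] that by auto
  qed
  have n\<sigma>: "\<sigma> i \<noteq> \<sigma> j" if "i < n" "j < n" "i \<noteq> j" for i j
  proof
    assume "\<sigma> i = \<sigma> j"
    then have "q i = q j" using eqv[of "q i" "q j"] rq that unfolding \<sigma>_def N_def by auto
    then show False using inj_onD[OF iq] that by auto
  qed
  have inj\<rho>: "inj_on \<rho> {..<n}" using n\<rho> unfolding inj_on_def by blast
  have inj\<sigma>: "inj_on \<sigma> {..<n}" using n\<sigma> unfolding inj_on_def by blast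
  have \<rho>k: "\<rho> k = 0" unfolding \<rho>_def a_def by simp
  have \<rho>k1: "\<rho> (Suc k) = M + 1" using cp unfolding \<rho>_def a_def N_def M_def .
  have "(\<sigma> (Suc k) - \<sigma> k) mod N = M - 1"
    using cq unfolding \<sigma>_def N_def M_def by (simp add: mod_diff_eq)
  then have \<sigma>k: "\<sigma> (Suc k) - \<sigma> k = M - 1 \<or> \<sigma> (Suc k) - \<sigma> k = M - 1 - 2*M"
    using mod_lin[of "\<sigma> k" N "\<sigma> (Suc k)"] r\<sigma>[of k] r\<sigma>[of "Suc k"] NM
    by (auto split: if_splits)
  show False
  proof (cases "k = 0")
    case False
    then have k3: "k + 3 < n" and k1: "k \<ge> 1" using kc by auto
    have e: "Suc (k - 1) = k" using k1 by simp
    show False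
      apply (rule interior_arith[where M=M and pA="\<rho> (k-1)" and pB="\<rho> k" and pC="\<rho> (Suc k)"
          and pD="\<rho> (k+2)" and pE="\<rho> (k+3)" and qA="\<sigma> (k-1)" and qB="\<sigma> k" and qC="\<sigma> (Suc k)"
          and qD="\<sigma> (k+2)" and qE="\<sigma> (k+3)"])
      using M3 r\<rho> r\<sigma> NM \<rho>k \<rho>k1 \<sigma>k
        Ap[of "k-1"] Ap[of "Suc k"] Ap[of "k+2"] Aq[of "k-1"] Aq[of "Suc k"] Aq[of "k+2"]
        Av[of "k-1"] Av[of k] Av[of "Suc k"] Av[of "k+2"] Av[of "k+3"]
        n\<rho>[of "k+2" k] n\<rho>[of "k-1" "Suc k"] n\<rho>[of "k+3" "k-1"] n\<rho>[of "k+3" "Suc k"]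
        n\<sigma>[of "k+2" "Suc k"] n\<sigma>[of "k-1" k] n\<sigma>[of "k+3" "Suc k"] n\<sigma>[of "k+3" "k-1"]
        n\<sigma>[of "k+2" k] n\<sigma>[of "k-1" "Suc k"]
        k3 k1 e
      by (simp_all add: add.commute eval_nat_numeral)
  next
    case True
    then have n6: "6 \<le> n" using nm m3 by simp
    have K: "(\<rho> 3 = M + 2 \<or> \<sigma> 3 = 2*M - 1) \<and> \<rho> 2 = 1 \<and> \<sigma> 0 = M + 1 \<and> \<sigma> 1 = 0 \<and> \<sigma> 2 = M"
      apply (rule k0_arith[where M=M and pA="\<rho> 0" and pB="\<rho> 1" and pC="\<rho> 2" and pD="\<rho> 3" and pE="\<rho> 4"
        and qA="\<sigma> 0" and qB="\<sigma> 1" and qC="\<sigma> 2" and qD="\<sigma> 3" and qE="\<sigma> 4"])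
      using M3 r\<rho> r\<sigma> NM \<rho>k \<rho>k1 \<sigma>k True n6
        Ap[of 1] Ap[of 2] Ap[of 3] Aq[of 1] Aq[of 2] Aq[of 3]
        Av[of 0] Av[of 1] Av[of 2] Av[of 4]
        n\<rho>[of 2 0] n\<rho>[of 3 1] n\<rho>[of 4 0] n\<rho>[of 4 2]
        n\<sigma>[of 2 0] n\<sigma>[of 3 1] n\<sigma>[of 4 2] n\<sigma>[of 4 0]
      by (simp_all add: eval_nat_numeral)
    have \<rho>01: "\<rho> 0 = 0" "\<rho> 1 = M + 1" using \<rho>k \<rho>k1 True by auto
    show False
    proof (cases "\<rho> 3 = M + 2")
      case True
      show False
      proof (rule chain[OF nm m3 inj\<rho>])
        show "\<rho> 3 \<in> {int m + 2..2 * int m - 1}" using True M3 NM r\<rho>[of 3] unfolding M_def N_def by auto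
      next
        fix j assume j: "3 \<le> j" "j + 2 < n" "\<rho> j \<in> {int m + 2..2 * int m - 1}"
        have j3: "M + 2 \<le> \<rho> j" "\<rho> j \<le> 2*M - 1" using j(3) unfolding M_def by auto
        have "M + 2 \<le> \<rho> (j+2) \<and> \<rho> (j+2) \<le> 2*M - 1"
          apply (rule stepP[OF M3 j3, of "\<rho> (Suc j)"])
          using j r\<rho> NM Ap[of j] Ap[of "Suc j"] K \<rho>01
            n\<rho>[of "Suc j" 2] n\<rho>[of "j+2" 0] n\<rho>[of "j+2" 2] n\<rho>[of "j+2" 1]
          by auto
        then show "\<rho> (j + 2) \<in> {int m + 2..2 * int m - 1}" unfolding M_def by auto
      qed
    next
      case False
      then have s3: "\<sigma> 3 = 2*M - 1" using K by auto
      show False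
      proof (rule chain[OF nm m3 inj\<sigma>])
        show "\<sigma> 3 \<in> {int m + 2..2 * int m - 1}" using s3 M3 unfolding M_def by auto
      next
        fix j assume j: "3 \<le> j" "j + 2 < n" "\<sigma> j \<in> {int m + 2..2 * int m - 1}"
        have j3: "M + 2 \<le> \<sigma> j" "\<sigma> j \<le> 2*M - 1" using j(3) unfolding M_def by auto
        have "M + 2 \<le> \<sigma> (j+2) \<and> \<sigma> (j+2) \<le> 2*M - 1"
          apply (rule stepQ[OF M3 j3, of "\<sigma> (Suc j)"])
          using j r\<sigma> NM Aq[of j] Aq[of "Suc j"] K
            n\<sigma>[of "Suc j" 2] n\<sigma>[of "j+2" 1] n\<sigma>[of "j+2" 2] n\<sigma>[of "j+2" 0]
          by auto
        then show "\<sigma> (j + 2) \<in> {int m + 2..2 * int m - 1}" unfolding M_def by auto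
      qed
    qed
  qed
qed


lemma cdist_sym: "cdist n a b = cdist n b a"
  unfolding cdist_def by (simp add: min.commute)

lemma negmod:
  fixes x N M :: int
  assumes "N = 2*M" "M \<ge> 3"
  shows "x mod N = M - 1 \<Longrightarrow> (- x) mod N = M + 1"
    and "x mod N = M + 1 \<Longrightarrow> (- x) mod N = M - 1"
  using assms by (auto simp: zmod_zminus1_eq_if)

lemma full_core:
  fixes n m k :: nat and p q :: "nat \<Rightarrow> int"
  assumes nm: "n = 2*m" and m3: "m \<ge> 3"
    and rp: "\<forall>j<n. 1 \<le> p j \<and> p j \<le> int n" and rq: "\<forall>j<n. 1 \<le> q j \<and> q j \<le> int n"
    and ip: "inj_on p {..<n}" and iq: "inj_on q {..<n}"
    and hp: "\<forall>j. Suc j < n \<longrightarrow> int m - 1 \<le> cdist n (p j) (p (Suc j))"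
    and hq: "\<forall>j. Suc j < n \<longrightarrow> int m - 1 \<le> cdist n (q j) (q (Suc j))"
    and hv: "\<forall>j<n. int m - 1 \<le> cdist n (p j) (q j)"
    and kn: "Suc k < n"
    and cp: "(p (Suc k) - p k) mod int n = int m + 1"
    and cq: "(q (Suc k) - q k) mod int n = int m - 1"
  shows False
proof (cases "k = 0 \<or> k + 3 < n")
  case True
  then show False using core[OF nm m3 rp rq ip iq hp hq hv kn cp cq] by blast
next
  case False
  define p' where "p' j = q (n - 1 - j)" for j
  define q' where "q' j = p (n - 1 - j)" for j
  define k' where "k' = n - 2 - k"
  have kc: "k' = 0 \<or> k' + 3 < n" using False kn nm m3 unfolding k'_def by auto
  have kn': "Suc k' < n" using False kn nm m3 unfolding k'_def by auto
  have rp': "\<forall>j<n. 1 \<le> p' j \<and> p' j \<le> int n" using rq unfolding p'_def by auto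
  have rq': "\<forall>j<n. 1 \<le> q' j \<and> q' j \<le> int n" using rp unfolding q'_def by auto
  have ip': "inj_on p' {..<n}"
  proof (rule inj_onI)
    fix i j assume "i \<in> {..<n}" "j \<in> {..<n}" "p' i = p' j"
    then have "n - 1 - i = n - 1 - j" using inj_onD[OF iq, of "n - 1 - i" "n - 1 - j"] unfolding p'_def by auto
    then show "i = j" using \<open>i \<in> {..<n}\<close> \<open>j \<in> {..<n}\<close> by auto
  qed
  have iq': "inj_on q' {..<n}"
  proof (rule inj_onI)
    fix i j assume "i \<in> {..<n}" "j \<in> {..<n}" "q' i = q' j"
    then have "n - 1 - i = n - 1 - j" using inj_onD[OF ip, of "n - 1 - i" "n - 1 - j"] unfolding q'_def by auto
    then show "i = j" using \<open>i \<in> {..<n}\<close> \<open>j \<in> {..<n}\<close> by auto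
  qed
  have hp': "\<forall>j. Suc j < n \<longrightarrow> int m - 1 \<le> cdist n (p' j) (p' (Suc j))"
  proof (intro allI impI)
    fix j assume j: "Suc j < n"
    have e1: "n - 1 - j = Suc (n - 2 - j)" using j by auto
    have e2: "n - 1 - Suc j = n - 2 - j" by simp
    have H: "int m - 1 \<le> cdist n (q (n - 2 - j)) (q (Suc (n - 2 - j)))" using hq j by auto
    show "int m - 1 \<le> cdist n (p' j) (p' (Suc j))" unfolding p'_def e1 e2
      cdist_sym[of n "q (Suc (n - 2 - j))"] using H .
  qed
  have hq': "\<forall>j. Suc j < n \<longrightarrow> int m - 1 \<le> cdist n (q' j) (q' (Suc j))"
  proof (intro allI impI)
    fix j assume j: "Suc j < n"
    have e1: "n - 1 - j = Suc (n - 2 - j)" using j by auto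
    have e2: "n - 1 - Suc j = n - 2 - j" by simp
    have H: "int m - 1 \<le> cdist n (p (n - 2 - j)) (p (Suc (n - 2 - j)))" using hp j by auto
    show "int m - 1 \<le> cdist n (q' j) (q' (Suc j))" unfolding q'_def e1 e2
      cdist_sym[of n "p (Suc (n - 2 - j))"] using H .
  qed
  have hv': "\<forall>j<n. int m - 1 \<le> cdist n (p' j) (q' j)"
    using hv unfolding p'_def q'_def by (auto simp: cdist_sym)
  have i1: "n - 1 - k' = Suc k" and i2: "n - 1 - Suc k' = k" using False kn unfolding k'_def by auto
  have NM: "int n = 2 * int m" using nm by simp
  have "(- (q (Suc k) - q k)) mod int n = int m + 1" using negmod(1)[OF NM, of "q (Suc k) - q k"] cq m3 by simp
  then have cp': "(p' (Suc k') - p' k') mod int n = int m + 1" unfolding p'_def i1 i2 by simp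
  have "(- (p (Suc k) - p k)) mod int n = int m - 1" using negmod(2)[OF NM, of "p (Suc k) - p k"] cp m3 by simp
  then have cq': "(q' (Suc k') - q' k') mod int n = int m - 1" unfolding q'_def i1 i2 by simp
  show False using core[OF nm m3 rp' rq' ip' iq' hp' hq' hv' kn' cp' cq' kc] .
qed


lemma finite_pairs:
  "finite {g i j | i j. P i j \<and> i < (A::nat) \<and> j < (B::nat)}"
proof -
  have "{g i j | i j. P i j \<and> i < A \<and> j < B} \<subseteq> (\<lambda>(i, j). g i j) ` ({..<A} \<times> {..<B})"
    by auto
  then show ?thesis by (rule finite_subset) simp
qed

theorem mainTheorem17:
  fixes n :: nat and d d' :: "int list" and j :: nat
  assumes "n \<ge> 6" and "even n"
    and "neighbors n d d'"
    and "1 \<le> j" and "j \<le> n - 1"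
  shows "\<not> (d ! (j - 1) = 1 \<and> d' ! (j - 1) = -1) \<and> \<not> (d ! (j - 1) = -1 \<and> d' ! (j - 1) = 1)"
proof -
  obtain m where nm: "n = 2*m" using assms(2) by (auto elim: evenE)
  have m3: "m \<ge> 3" using assms(1) nm by simp
  obtain r r' where lr: "latin_row n r" and lr': "latin_row n r'"
    and dr: "ext_diff_row n r = d" and dr': "ext_diff_row n r' = d'"
    and rd: "rect_inner_dist n [r, r'] = int n div 2 - 1"
    using assms(3) unfolding neighbors_def by blast
  have nd: "int n div 2 = int m" using nm by simp
  define k where "k = j - 1"
  have kn: "Suc k < n" using assms(4,5) unfolding k_def by auto
  let ?H = "{cdist n ([r, r'] ! i ! j) ([r, r'] ! i ! Suc j) | i j. i < length [r, r'] \<and> Suc j < n}"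
  let ?V = "{cdist n ([r, r'] ! i ! j) ([r, r'] ! Suc i ! j) | i j. Suc i < length [r, r'] \<and> j < n}"
  have finH: "finite ?H"
    using finite_pairs[of "\<lambda>i j. cdist n ([r, r'] ! i ! j) ([r, r'] ! i ! Suc j)" "\<lambda>i j. Suc j < n" 2 n]
    by (rule finite_subset[rotated]) force
  have finV: "finite ?V"
    using finite_pairs[of "\<lambda>i j. cdist n ([r, r'] ! i ! j) ([r, r'] ! Suc i ! j)" "\<lambda>i j. Suc i < 2" 2 n]
    by (rule finite_subset[rotated]) force
  have lb: "int m - 1 \<le> x" if "x \<in> ?H \<union> ?V" for x
  proof -
    have "Min (?H \<union> ?V) \<le> x" using finH finV that by (intro Min_le) auto
    then show ?thesis using rd nd unfolding rect_inner_dist_def by simp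
  qed
  have hp: "\<forall>j. Suc j < n \<longrightarrow> int m - 1 \<le> cdist n (r ! j) (r ! Suc j)"
  proof (intro allI impI)
    fix i assume "Suc i < n"
    then have "cdist n (r ! i) (r ! Suc i) \<in> ?H"
      by (intro CollectI exI[of _ "0::nat"] exI[of _ i]) simp
    then show "int m - 1 \<le> cdist n (r ! i) (r ! Suc i)" using lb by blast
  qed
  have hq: "\<forall>j. Suc j < n \<longrightarrow> int m - 1 \<le> cdist n (r' ! j) (r' ! Suc j)"
  proof (intro allI impI)
    fix i assume "Suc i < n"
    then have "cdist n (r' ! i) (r' ! Suc i) \<in> ?H"
      by (intro CollectI exI[of _ "1::nat"] exI[of _ i]) simp
    then show "int m - 1 \<le> cdist n (r' ! i) (r' ! Suc i)" using lb by blast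
  qed
  have hv: "\<forall>j<n. int m - 1 \<le> cdist n (r ! j) (r' ! j)"
  proof (intro allI impI)
    fix i assume "i < n"
    then have "cdist n (r ! i) (r' ! i) \<in> ?V"
      by (intro CollectI exI[of _ "0::nat"] exI[of _ i]) simp
    then show "int m - 1 \<le> cdist n (r ! i) (r' ! i)" using lb by blast
  qed
  have hv2: "\<forall>j<n. int m - 1 \<le> cdist n (r' ! j) (r ! j)" using hv by (simp add: cdist_sym)
  have rp: "\<forall>j<n. 1 \<le> r ! j \<and> r ! j \<le> int n"
    using lr unfolding latin_row_def by (metis atLeastAtMost_iff nth_mem)
  have rq: "\<forall>j<n. 1 \<le> r' ! j \<and> r' ! j \<le> int n"
    using lr' unfolding latin_row_def by (metis atLeastAtMost_iff nth_mem)
  have ip: "inj_on (\<lambda>j. r ! j) {..<n}"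
    using lr unfolding latin_row_def inj_on_def by (auto simp: distinct_conv_nth)
  have iq: "inj_on (\<lambda>j. r' ! j) {..<n}"
    using lr' unfolding latin_row_def inj_on_def by (auto simp: distinct_conv_nth)
  have dk: "ext_diff_row n s ! k = (s ! Suc k - s ! k) mod int n - int m" for s
  proof -
    have "k < n - 1" using kn by simp
    then show ?thesis using nd unfolding ext_diff_row_def by (simp add: nth_append)
  qed
  show ?thesis
  proof (intro conjI notI)
    assume a: "d ! (j - 1) = 1 \<and> d' ! (j - 1) = -1"
    have cp: "(r ! Suc k - r ! k) mod int n = int m + 1" using a dr dk[of r] unfolding k_def by simp
    have cq: "(r' ! Suc k - r' ! k) mod int n = int m - 1" using a dr' dk[of r'] unfolding k_def by simp
    show False using full_core[OF nm m3 rp rq ip iq hp hq hv kn cp cq] .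
  next
    assume a: "d ! (j - 1) = -1 \<and> d' ! (j - 1) = 1"
    have cq: "(r ! Suc k - r ! k) mod int n = int m - 1" using a dr dk[of r] unfolding k_def by simp
    have cp: "(r' ! Suc k - r' ! k) mod int n = int m + 1" using a dr' dk[of r'] unfolding k_def by simp
    show False using full_core[OF nm m3 rq rp iq ip hq hp hv2 kn cp cq] .
  qed
qed

end
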